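(* Let $\mathcal{T}$ be a finite tree, $w:V(\mathcal{T})\to\mathbb{R}_{\ge 0}$ a weight function, and $m=w(\mathcal{T})$. Then $$\mathtt{cent}(\mathcal{T},w)\le 2\cdot\mathtt{OPT}(\mathcal{T},w)-m.$$
   Context: For a subgraph $\mathcal{H}$ of $\mathcal{T}$, $w(\mathcal{H})=\sum_{x\in V(\mathcal{H})}w(x)$; for a subgraph $\mathcal{H}$, $w$ also denotes its restriction to $V(\mathcal{H})$. A search tree (STT) on a tree $\mathcal{T}$ is a rooted tree $T$ with vertex set $V(\mathcal{T})$ defined recursively: its root is an arbitrary vertex $r\in V(\mathcal{T})$, and the children of $r$ are the roots of search trees built on the connected components of $\mathcal{T}-r$ (one per component); a single-vertex tree has only itself as search tree. The cost of $T$ is $\mathtt{cost}_w(T)=\sum_{x}w(x)\cdot\mathtt{depth}_T(x)$, where the root has depth $1$. $\mathtt{OPT}(\mathcal{T},w)$ is the minimum cost over all search trees on $\mathcal{T}$. A vertex $v$ is a centroid of $(\mathcal{T},w)$ if every connected component $\mathcal{H}$ of $\mathcal{T}-v$ satisfies $w(\mathcal{H})\le w(\mathcal{T})/2$. A search tree $T$ is a centroid tree of $(\mathcal{T},w)$ if for every vertex $x$, $x$ is a centroid of $(\mathcal{T}[V(T_x)],w)$, where $T_x$ is the subtree of $T$ rooted at $x$. $\mathtt{cent}(\mathcal{T},w)$ is the maximum cost of a centroid tree of $(\mathcal{T},w)$. *)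

theory Defs
  imports Complex_Main
begin

definition ugraph :: "'a set \<Rightarrow> ('a \<Rightarrow> 'a \<Rightarrow> bool) \<Rightarrow> bool" where
  "ugraph V E \<longleftrightarrow> (\<forall>u v. E u v \<longrightarrow> u \<in> V \<and> v \<in> V \<and> u \<noteq> v \<and> E v u)"

definition comp :: "('a \<Rightarrow> 'a \<Rightarrow> bool) \<Rightarrow> 'a set \<Rightarrow> 'a \<Rightarrow> 'a set" where
  "comp E S x = {y. x \<in> S \<and> (\<lambda>a b. a \<in> S \<and> b \<in> S \<and> E a b)\<^sup>*\<^sup>* x y}"

definition components :: "('a \<Rightarrow> 'a \<Rightarrow> bool) \<Rightarrow> 'a set \<Rightarrow> 'a set set" where
  "components E S = comp E S ` S"

definition connected_on :: "('a \<Rightarrow> 'a \<Rightarrow> bool) \<Rightarrow> 'a set \<Rightarrow> bool" where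
  "connected_on E S \<longleftrightarrow> (\<forall>x\<in>S. \<forall>y\<in>S. y \<in> comp E S x)"

definition is_cycle :: "('a \<Rightarrow> 'a \<Rightarrow> bool) \<Rightarrow> 'a list \<Rightarrow> bool" where
  "is_cycle E cs \<longleftrightarrow> length cs \<ge> 3 \<and> distinct cs
     \<and> (\<forall>i. Suc i < length cs \<longrightarrow> E (cs ! i) (cs ! Suc i))
     \<and> E (last cs) (hd cs)"

definition is_tree :: "'a set \<Rightarrow> ('a \<Rightarrow> 'a \<Rightarrow> bool) \<Rightarrow> bool" where
  "is_tree V E \<longleftrightarrow> finite V \<and> V \<noteq> {} \<and> ugraph V E \<and> connected_on E V
     \<and> \<not> (\<exists>cs. is_cycle E cs)"

datatype 'a stree = Node 'a "'a stree list"

inductive is_stt :: "('a \<Rightarrow> 'a \<Rightarrow> bool) \<Rightarrow> 'a set \<Rightarrow> 'a stree \<Rightarrow> bool" for E where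
  "\<lbrakk> r \<in> S; distinct Cs; set Cs = components E (S - {r});
     list_all2 (is_stt E) Cs ts \<rbrakk> \<Longrightarrow> is_stt E S (Node r ts)"

fun depths :: "'a stree \<Rightarrow> nat \<Rightarrow> ('a \<times> nat) list" where
  "depths (Node r ts) d = (r, d) # concat (map (\<lambda>t. depths t (Suc d)) ts)"

definition cost :: "('a \<Rightarrow> real) \<Rightarrow> 'a stree \<Rightarrow> real" where
  "cost w T = (\<Sum>(x, d)\<leftarrow>depths T 1. w x * real d)"

fun verts :: "'a stree \<Rightarrow> 'a set" where
  "verts (Node r ts) = insert r (\<Union>t\<in>set ts. verts t)"

fun subtrees :: "'a stree \<Rightarrow> 'a stree list" where
  "subtrees (Node r ts) = Node r ts # concat (map subtrees ts)"

fun root :: "'a stree \<Rightarrow> 'a" where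
  "root (Node r ts) = r"

definition is_centroid :: "('a \<Rightarrow> 'a \<Rightarrow> bool) \<Rightarrow> ('a \<Rightarrow> real) \<Rightarrow> 'a set \<Rightarrow> 'a \<Rightarrow> bool" where
  "is_centroid E w S v \<longleftrightarrow> v \<in> S \<and>
     (\<forall>H \<in> components E (S - {v}). sum w H \<le> sum w S / 2)"

definition is_centroid_tree :: "('a \<Rightarrow> 'a \<Rightarrow> bool) \<Rightarrow> ('a \<Rightarrow> real) \<Rightarrow> 'a set \<Rightarrow> 'a stree \<Rightarrow> bool" where
  "is_centroid_tree E w V T \<longleftrightarrow> is_stt E V T \<and>
     (\<forall>S \<in> set (subtrees T). is_centroid E w (verts S) (root S))"

definition OPT :: "'a set \<Rightarrow> ('a \<Rightarrow> 'a \<Rightarrow> bool) \<Rightarrow> ('a \<Rightarrow> real) \<Rightarrow> real" where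
  "OPT V E w = Min {cost w T | T. is_stt E V T}"

definition cent :: "'a set \<Rightarrow> ('a \<Rightarrow> 'a \<Rightarrow> bool) \<Rightarrow> ('a \<Rightarrow> real) \<Rightarrow> real" where
  "cent V E w = Max {cost w T | T. is_centroid_tree E w V T}"

end

theory Submission
  imports Defs
begin

definition rel :: "('a \<Rightarrow> 'a \<Rightarrow> bool) \<Rightarrow> 'a set \<Rightarrow> 'a \<Rightarrow> 'a \<Rightarrow> bool" where
  "rel E S = (\<lambda>a b. a \<in> S \<and> b \<in> S \<and> E a b)"

lemma comp_alt: "comp E S x = {y. x \<in> S \<and> (rel E S)\<^sup>*\<^sup>* x y}"
  by (simp add: comp_def rel_def)

lemma rel_rtrancl_in: "(rel E S)\<^sup>*\<^sup>* x y \<Longrightarrow> x \<in> S \<Longrightarrow> y \<in> S"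
  by (induction rule: rtranclp_induct) (auto simp: rel_def)

lemma comp_sub: "comp E S x \<subseteq> S"
  using rel_rtrancl_in by (auto simp: comp_alt)

lemma comp_subD: assumes "y \<in> comp E S x" shows "y \<in> S"
  using subsetD[OF comp_sub assms] .

lemma comp_self: "x \<in> S \<Longrightarrow> x \<in> comp E S x"
  by (simp add: comp_alt)

lemma rel_sym_rtrancl:
  assumes sym: "symp E"
  shows "(rel E S)\<^sup>*\<^sup>* x y \<Longrightarrow> (rel E S)\<^sup>*\<^sup>* y x"
proof (induction rule: rtranclp_induct)
  case base then show ?case by simp
next
  case (step y z)
  then have "rel E S z y" using step(2) sym unfolding rel_def symp_def by blast
  then show ?case using step by (meson converse_rtranclp_into_rtranclp)
qed

lemma comp_eq:
  assumes sym: "symp E" and y: "y \<in> comp E S x"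
  shows "comp E S y = comp E S x"
proof -
  have xS: "x \<in> S" and r: "(rel E S)\<^sup>*\<^sup>* x y" using y by (auto simp: comp_alt)
  have yS: "y \<in> S" using comp_subD[OF y] .
  have r': "(rel E S)\<^sup>*\<^sup>* y x" using rel_sym_rtrancl[OF sym r] .
  show ?thesis unfolding comp_alt
  proof (intro set_eqI iffI)
    fix z assume "z \<in> {z. y \<in> S \<and> (rel E S)\<^sup>*\<^sup>* y z}"
    then have "(rel E S)\<^sup>*\<^sup>* y z" by simp
    then show "z \<in> {z. x \<in> S \<and> (rel E S)\<^sup>*\<^sup>* x z}" using rtranclp_trans[OF r] xS by simp
  next
    fix z assume "z \<in> {z. x \<in> S \<and> (rel E S)\<^sup>*\<^sup>* x z}"
    then have "(rel E S)\<^sup>*\<^sup>* x z" by simp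
    then show "z \<in> {z. y \<in> S \<and> (rel E S)\<^sup>*\<^sup>* y z}" using rtranclp_trans[OF r'] yS by simp
  qed
qed

lemma comp_disj:
  assumes sym: "symp E"
    and "z \<in> comp E S x" "z \<in> comp E S y"
  shows "comp E S x = comp E S y"
  using comp_eq[OF sym assms(2)] comp_eq[OF sym assms(3)] by simp

lemma components_disj:
  assumes sym: "symp E"
    and "C1 \<in> components E S" "C2 \<in> components E S" "C1 \<noteq> C2"
  shows "C1 \<inter> C2 = {}"
proof -
  obtain a b where a: "C1 = comp E S a" and b: "C2 = comp E S b"
    using assms(2,3) unfolding components_def by auto
  show ?thesis
  proof (rule ccontr)
    assume "C1 \<inter> C2 \<noteq> {}"
    then obtain z where "z \<in> comp E S a" "z \<in> comp E S b" using a b by auto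
    then have "C1 = C2" using comp_disj[OF sym] a b by metis
    then show False using assms(4) by simp
  qed
qed

lemma Union_components: "\<Union> (components E S) = S"
proof
  show "\<Union> (components E S) \<subseteq> S" unfolding components_def using comp_subD by auto
  show "S \<subseteq> \<Union> (components E S)"
  proof
    fix x assume x: "x \<in> S"
    show "x \<in> \<Union> (components E S)" unfolding components_def using x comp_self[OF x] by (rule UN_I)
  qed
qed

lemma components_sub: "C \<in> components E S \<Longrightarrow> C \<subseteq> S"
  unfolding components_def using comp_subD by auto

lemma components_ne: "C \<in> components E S \<Longrightarrow> C \<noteq> {}"
  unfolding components_def using comp_self by (metis emptyE imageE)

lemma finite_components: "finite S \<Longrightarrow> finite (components E S)"
  unfolding components_def by simp

lemma comp_mono: "S' \<subseteq> S \<Longrightarrow> comp E S' x \<subseteq> comp E S x"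
proof -
  assume sub: "S' \<subseteq> S"
  have "rel E S' \<le> rel E S" using sub by (auto simp: rel_def)
  then have "(rel E S')\<^sup>*\<^sup>* \<le> (rel E S)\<^sup>*\<^sup>*" by (rule rtranclp_mono)
  then show ?thesis using sub by (auto simp: comp_alt)
qed

lemma connected_sub_comp:
  assumes "connected_on E H" "H \<subseteq> S" "x \<in> H"
  shows "H \<subseteq> comp E S x"
proof
  fix y assume "y \<in> H"
  then have "y \<in> comp E H x" using assms(1,3) unfolding connected_on_def by simp
  then show "y \<in> comp E S x" by (rule subsetD[OF comp_mono[OF assms(2)]])
qed

lemma comp_closed:
  assumes "a \<in> comp E S x" "b \<in> S" "E a b"
  shows "b \<in> comp E S x"
proof -
  have "a \<in> S" using comp_subD[OF assms(1)] .
  then have "rel E S a b" using assms by (simp add: rel_def)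
  then show ?thesis using assms(1) by (auto simp: comp_alt intro: rtranclp.rtrancl_into_rtrancl)
qed

lemma comp_connected:
  assumes sym: "symp E"
  shows "connected_on E (comp E S x)"
  unfolding connected_on_def
proof (intro ballI)
  define C where "C = comp E S x"
  fix y z assume y: "y \<in> comp E S x" and z: "z \<in> comp E S x"
  have yC: "y \<in> C" using y C_def by simp
  have cy: "comp E S y = C" using comp_eq[OF sym y] C_def by simp
  then have "z \<in> comp E S y" using z C_def by simp
  then have r: "(rel E S)\<^sup>*\<^sup>* y z" by (simp add: comp_alt)
  have "(rel E C)\<^sup>*\<^sup>* y z \<and> z \<in> C" using r
  proof (induction rule: rtranclp_induct)
    case base then show ?case using yC by simp
  next
    case (step b c)
    have bC: "b \<in> C" using step(3) by simp
    have cS: "c \<in> S" and ebc: "E b c" using step(2) by (auto simp: rel_def)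
    have cC: "c \<in> C" using comp_closed[of b E S x c] bC cS ebc C_def by simp
    then have "rel E C b c" using bC ebc by (simp add: rel_def)
    then show ?case using step(3) cC by (meson rtranclp.rtrancl_into_rtrancl)
  qed
  then have "(rel E C)\<^sup>*\<^sup>* y z" by simp
  then have "z \<in> comp E C y" using yC by (simp only: comp_alt mem_Collect_eq)
  then show "z \<in> comp E (comp E S x) y" using C_def by simp
qed

lemma components_connected:
  assumes sym: "symp E"
  shows "C \<in> components E S \<Longrightarrow> connected_on E C"
  unfolding components_def using comp_connected[OF sym] by auto


fun dpt :: "'a stree \<Rightarrow> 'a \<Rightarrow> nat" where
  "dpt (Node r ts) x = (if x = r then 1 else Suc (sum_list (map (\<lambda>t. if x \<in> verts t then dpt t x else 0) ts)))"

declare dpt.simps[simp del]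

lemma finite_verts: "finite (verts T)"
  by (induction T) auto

lemma stt_verts: "is_stt E S T \<Longrightarrow> verts T = S"
proof (induction rule: is_stt.induct)
  case (1 r S Cs ts)
  have "Cs = map verts ts" using 1(4)
    by (auto simp: list_all2_conv_all_nth intro!: nth_equalityI)
  then have "(\<Union>t\<in>set ts. verts t) = \<Union>(set Cs)" by auto
  also have "\<dots> = S - {r}" using 1(3) Union_components by metis
  finally show ?case using 1(1) by auto
qed

lemma stt_char:
  "is_stt E S (Node r ts) \<longleftrightarrow> S = verts (Node r ts) \<and> r \<in> S \<and> distinct (map verts ts)
     \<and> set (map verts ts) = components E (S - {r}) \<and> (\<forall>t\<in>set ts. is_stt E (verts t) t)"
proof
  assume a: "is_stt E S (Node r ts)"
  then have v: "verts (Node r ts) = S" by (rule stt_verts)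
  from a obtain Cs where Cs: "r \<in> S" "distinct Cs" "set Cs = components E (S - {r})"
    "list_all2 (is_stt E) Cs ts" by (cases rule: is_stt.cases) auto
  have len: "length Cs = length ts" and nth: "\<And>i. i < length ts \<Longrightarrow> is_stt E (Cs!i) (ts!i)"
    using Cs(4) by (auto simp: list_all2_conv_all_nth)
  have nv: "\<And>i. i < length ts \<Longrightarrow> verts (ts!i) = Cs!i" using nth stt_verts by metis
  have cm: "Cs = map verts ts" using len nv by (intro nth_equalityI) auto
  have "\<forall>t\<in>set ts. is_stt E (verts t) t"
  proof
    fix t assume "t \<in> set ts"
    then obtain i where i: "i < length ts" "t = ts!i" by (metis in_set_conv_nth)
    then show "is_stt E (verts t) t" using nth[OF i(1)] nv[OF i(1)] by simp
  qed
  then show "S = verts (Node r ts) \<and> r \<in> S \<and> distinct (map verts ts)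
     \<and> set (map verts ts) = components E (S - {r}) \<and> (\<forall>t\<in>set ts. is_stt E (verts t) t)"
    using v Cs cm by simp
next
  assume a: "S = verts (Node r ts) \<and> r \<in> S \<and> distinct (map verts ts)
     \<and> set (map verts ts) = components E (S - {r}) \<and> (\<forall>t\<in>set ts. is_stt E (verts t) t)"
  have la: "list_all2 (is_stt E) (map verts ts) ts" using a
    by (auto simp: list_all2_conv_all_nth)
  have h1: "r \<in> S" using a by blast
  have h2: "distinct (map verts ts)" using a by blast
  have h3: "set (map verts ts) = components E (S - {r})" using a by blast
  show "is_stt E S (Node r ts)" by (rule is_stt.intros[OF h1 h2 h3 la])
qed

lemma stt_D:
  assumes "is_stt E S (Node r ts)"
  shows "S = verts (Node r ts)" "r \<in> S" "distinct (map verts ts)"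
    "set (map verts ts) = components E (S - {r})" "\<And>t. t \<in> set ts \<Longrightarrow> is_stt E (verts t) t"
  using assms unfolding stt_char by blast+

lemma stt_I:
  assumes "S = verts (Node r ts)" "r \<in> S" "distinct (map verts ts)"
    "set (map verts ts) = components E (S - {r})" "\<And>t. t \<in> set ts \<Longrightarrow> is_stt E (verts t) t"
  shows "is_stt E S (Node r ts)"
proof -
  have la: "list_all2 (is_stt E) (map verts ts) ts" using assms(5)
    by (auto simp: list_all2_conv_all_nth)
  show ?thesis by (rule is_stt.intros[OF assms(2,3,4) la])
qed

lemma stt_root_notin:
  assumes "is_stt E S (Node r ts)" "t \<in> set ts"
  shows "r \<notin> verts t"
proof -
  have "verts t \<in> components E (S - {r})" using stt_D(4)[OF assms(1)] assms(2) by (metis image_eqI set_map)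
  then have "verts t \<subseteq> S - {r}" by (rule components_sub)
  then show ?thesis by auto
qed

lemma stt_children_disj:
  assumes sym: "symp E"
    and "is_stt E S (Node r ts)" "t1 \<in> set ts" "t2 \<in> set ts" "t1 \<noteq> t2"
  shows "verts t1 \<inter> verts t2 = {}"
proof -
  have c: "distinct (map verts ts)" "set (map verts ts) = components E (S - {r})"
    using stt_D[OF assms(2)] by blast+
  then have "inj_on verts (set ts)" by (simp add: distinct_map)
  then have ne: "verts t1 \<noteq> verts t2" using assms(3-5) by (meson inj_on_def)
  have m1: "verts t1 \<in> components E (S - {r})" using c(2) assms(3) by (metis image_eqI set_map)
  have m2: "verts t2 \<in> components E (S - {r})" using c(2) assms(4) by (metis image_eqI set_map)
  show ?thesis using components_disj[OF sym m1 m2 ne] .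
qed

lemma sum_list_single:
  assumes "distinct ts" "t \<in> set ts" "\<And>t'. t' \<in> set ts \<Longrightarrow> t' \<noteq> t \<Longrightarrow> g t' = (0::nat)"
  shows "sum_list (map g ts) = g t"
proof -
  have "sum_list (map g ts) = sum g (set ts)" using assms(1) by (simp add: sum_list_distinct_conv_sum_set)
  also have "\<dots> = g t + sum g (set ts - {t})" using assms(2) by (simp add: sum.remove)
  also have "sum g (set ts - {t}) = 0" using assms(3) by (intro sum.neutral) auto
  finally show ?thesis by simp
qed

lemma dpt_child:
  assumes sym: "symp E"
    and st: "is_stt E S (Node r ts)" and t: "t \<in> set ts" and x: "x \<in> verts t"
  shows "dpt (Node r ts) x = Suc (dpt t x)"
proof -
  have xr: "x \<noteq> r" using stt_root_notin[OF st t] x by auto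
  have d: "distinct ts" using stt_D(3)[OF st] by (simp add: distinct_map)
  have z: "(if x \<in> verts t' then dpt t' x else 0) = 0" if t': "t' \<in> set ts" "t' \<noteq> t" for t'
  proof -
    have "verts t' \<inter> verts t = {}" using stt_children_disj[OF sym st t'(1) t t'(2)] .
    then have "x \<notin> verts t'" using x by blast
    then show ?thesis by simp
  qed
  have "sum_list (map (\<lambda>t. if x \<in> verts t then dpt t x else 0) ts) = (if x \<in> verts t then dpt t x else 0)"
    by (rule sum_list_single[OF d t z])
  then have "sum_list (map (\<lambda>t. if x \<in> verts t then dpt t x else 0) ts) = dpt t x"
    using x by simp
  then show ?thesis using xr by (simp add: dpt.simps)
qed

lemma dpt_root: "dpt (Node r ts) r = 1" by (simp add: dpt.simps)

lemma dpt_ge1: "dpt T x \<ge> 1"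
  by (cases T) (auto simp: dpt.simps)

lemma dpt_nonroot:
  assumes sym: "symp E"
    and st: "is_stt E S T" and x: "x \<in> S" "x \<noteq> root T"
  shows "dpt T x \<ge> 2"
proof (cases T)
  case (Node r ts)
  then have "x \<in> (\<Union>t\<in>set ts. verts t)" using stt_verts[OF st] x by auto
  then obtain t where "t \<in> set ts" "x \<in> verts t" by auto
  then show ?thesis using dpt_child[OF sym st[unfolded Node]] dpt_ge1[of t x] Node by auto
qed

definition cd :: "('a \<Rightarrow> real) \<Rightarrow> 'a stree \<Rightarrow> nat \<Rightarrow> real" where
  "cd w T d = (\<Sum>(x, k)\<leftarrow>depths T d. w x * real k)"

lemma sum_list_concat': "sum_list (concat xss) = sum_list (map sum_list xss)"
  by (induction xss) auto

lemma cd_Node: "cd w (Node r ts) d = w r * real d + (\<Sum>t\<leftarrow>ts. cd w t (Suc d))"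
proof -
  have "cd w (Node r ts) d = w r * real d + sum_list (map (\<lambda>(x, k). w x * real k) (concat (map (\<lambda>t. depths t (Suc d)) ts)))"
    by (simp add: cd_def)
  also have "sum_list (map (\<lambda>(x, k). w x * real k) (concat (map (\<lambda>t. depths t (Suc d)) ts)))
     = (\<Sum>t\<leftarrow>ts. cd w t (Suc d))"
    by (simp add: map_concat sum_list_concat' cd_def o_def)
  finally show ?thesis .
qed

lemma cost_cd: "cost w T = cd w T 1" by (simp add: cost_def cd_def)

lemma cd_formula:
  assumes sym: "symp E"
  shows "is_stt E (verts T) T \<Longrightarrow> cd w T d = (\<Sum>x\<in>verts T. w x * (real (dpt T x) + real d - 1))"
proof (induction T arbitrary: d)
  case (Node r ts)
  have st: "is_stt E (verts (Node r ts)) (Node r ts)" by fact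
  have ch: "\<And>t. t \<in> set ts \<Longrightarrow> is_stt E (verts t) t" using stt_D(5)[OF st] by blast
  have dts: "distinct ts" using stt_D(3)[OF st] by (simp add: distinct_map)
  have "cd w (Node r ts) d = w r * real d + (\<Sum>t\<leftarrow>ts. cd w t (Suc d))"
    by (rule cd_Node)
  also have "(\<Sum>t\<leftarrow>ts. cd w t (Suc d)) = (\<Sum>t\<in>set ts. cd w t (Suc d))"
    using dts by (simp add: sum_list_distinct_conv_sum_set)
  also have "\<dots> = (\<Sum>t\<in>set ts. \<Sum>x\<in>verts t. w x * (real (dpt (Node r ts) x) + real d - 1))"
  proof (intro sum.cong refl)
    fix t assume t: "t \<in> set ts"
    have "cd w t (Suc d) = (\<Sum>x\<in>verts t. w x * (real (dpt t x) + real (Suc d) - 1))"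
      using Node.IH[OF t ch[OF t]] .
    also have "\<dots> = (\<Sum>x\<in>verts t. w x * (real (dpt (Node r ts) x) + real d - 1))"
      using dpt_child[OF sym st t] by (intro sum.cong refl) auto
    finally show "cd w t (Suc d) = \<dots>" .
  qed
  also have "\<dots> = (\<Sum>x\<in>(\<Union>t\<in>set ts. verts t). w x * (real (dpt (Node r ts) x) + real d - 1))"
    by (rule sum.UNION_disjoint[symmetric]) (auto simp: finite_verts dest: stt_children_disj[OF sym st])
  finally have "cd w (Node r ts) d = w r * real d + \<dots>" .
  moreover have "r \<notin> (\<Union>t\<in>set ts. verts t)" using stt_root_notin[OF st] by auto
  ultimately show ?case by (simp add: finite_verts dpt_root)
qed

lemma cost_formula:
  assumes sym: "symp E" and st: "is_stt E S T"
  shows "cost w T = (\<Sum>x\<in>S. w x * real (dpt T x))"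
proof -
  have v: "verts T = S" using stt_verts[OF st] .
  show ?thesis using cd_formula[OF sym, of T w 1] st v by (simp add: cost_cd)
qed


lemma restrict:
  assumes sym: "symp E"
  shows "is_stt E S T \<Longrightarrow> H \<subseteq> S \<Longrightarrow> H \<noteq> {} \<Longrightarrow> connected_on E H \<Longrightarrow>
    \<exists>T'. is_stt E H T' \<and> (\<forall>x\<in>H. dpt T' x + (if root T \<in> H then 0 else 1) \<le> dpt T x)"
proof (induction T arbitrary: S H)
  case (Node r ts)
  note st = Node.prems(1)
  have ch: "S = verts (Node r ts)" "r \<in> S" "distinct (map verts ts)"
     "set (map verts ts) = components E (S - {r})" "\<And>t. t \<in> set ts \<Longrightarrow> is_stt E (verts t) t"
    using stt_D[OF st] by blast+
  have child_of: "\<exists>t\<in>set ts. K \<subseteq> verts t"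
    if K: "K \<subseteq> S - {r}" "K \<noteq> {}" "connected_on E K" for K
  proof -
    obtain x where x: "x \<in> K" using K by auto
    have "comp E (S - {r}) x \<in> components E (S - {r})" using x K unfolding components_def by auto
    then obtain t where t: "t \<in> set ts" "verts t = comp E (S - {r}) x" using ch(4) by (metis imageE set_map)
    have "K \<subseteq> comp E (S - {r}) x" using connected_sub_comp[OF K(3) K(1) x] .
    then show ?thesis using t by auto
  qed
  show ?case
  proof (cases "r \<in> H")
    case False
    then have HS: "H \<subseteq> S - {r}" using Node.prems by auto
    obtain t where t: "t \<in> set ts" "H \<subseteq> verts t" using child_of[OF HS Node.prems(3,4)] by auto
    obtain T' where T': "is_stt E H T'" "\<forall>x\<in>H. dpt T' x + (if root t \<in> H then 0 else 1) \<le> dpt t x"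
      using Node.IH[OF t(1) ch(5)[OF t(1)] t(2) Node.prems(3,4)] by auto
    have "\<forall>x\<in>H. dpt T' x + 1 \<le> dpt (Node r ts) x"
    proof
      fix x assume x: "x \<in> H"
      have "dpt (Node r ts) x = Suc (dpt t x)" using dpt_child[OF sym st t(1) subsetD[OF t(2) x]] .
      then show "dpt T' x + 1 \<le> dpt (Node r ts) x" using T'(2) x by (auto split: if_splits)
    qed
    then show ?thesis using T'(1) False by auto
  next
    case True
    have fin: "finite H" using Node.prems(2) ch(1) finite_verts by (metis finite_subset)
    have ex: "\<forall>K\<in>components E (H - {r}). \<exists>T'. is_stt E K T' \<and> (\<forall>y\<in>K. Suc (dpt T' y) \<le> dpt (Node r ts) y)"
    proof
      fix K assume K: "K \<in> components E (H - {r})"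
      have Ks: "K \<subseteq> S - {r}" using components_sub[OF K] Node.prems(2) by auto
      have Kn: "K \<noteq> {}" using components_ne[OF K] .
      have Kc: "connected_on E K" using components_connected[OF sym K] .
      obtain t where t: "t \<in> set ts" "K \<subseteq> verts t" using child_of[OF Ks Kn Kc] by auto
      obtain T' where T': "is_stt E K T'" "\<forall>x\<in>K. dpt T' x + (if root t \<in> K then 0 else 1) \<le> dpt t x"
        using Node.IH[OF t(1) ch(5)[OF t(1)] t(2) Kn Kc] by auto
      have "\<forall>y\<in>K. Suc (dpt T' y) \<le> dpt (Node r ts) y"
      proof
        fix y assume y: "y \<in> K"
        have "dpt (Node r ts) y = Suc (dpt t y)" using dpt_child[OF sym st t(1) subsetD[OF t(2) y]] .
        then show "Suc (dpt T' y) \<le> dpt (Node r ts) y" using T'(2) y by (auto split: if_splits)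
      qed
      then show "\<exists>T'. is_stt E K T' \<and> (\<forall>y\<in>K. Suc (dpt T' y) \<le> dpt (Node r ts) y)" using T'(1) by auto
    qed
    then obtain f where f: "\<And>K. K\<in>components E (H - {r}) \<Longrightarrow> is_stt E K (f K) \<and> (\<forall>y\<in>K. Suc (dpt (f K) y) \<le> dpt (Node r ts) y)"
      by metis
    have "finite (components E (H - {r}))" using fin by (simp add: finite_components)
    then obtain Ks where Ks: "distinct Ks" "set Ks = components E (H - {r})"
      using finite_distinct_list by metis
    have vf: "\<And>K. K \<in> set Ks \<Longrightarrow> verts (f K) = K" using f Ks(2) stt_verts by metis
    have mv: "map verts (map f Ks) = Ks" using vf by (induction Ks) auto
    let ?T' = "Node r (map f Ks)"
    have vT: "verts ?T' = H"
    proof -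
      have "verts ?T' = insert r (\<Union>K\<in>set Ks. verts (f K))" by simp
      also have "\<dots> = insert r (\<Union>(set Ks))" using vf by simp
      also have "\<dots> = H" using Ks(2) Union_components[of E "H - {r}"] True by auto
      finally show ?thesis .
    qed
    have stT: "is_stt E H ?T'"
    proof (rule stt_I)
      show "H = verts ?T'" using vT by simp
      show "r \<in> H" by fact
      show "distinct (map verts (map f Ks))" using mv Ks(1) by simp
      show "set (map verts (map f Ks)) = components E (H - {r})" using mv Ks(2) by simp
      show "is_stt E (verts t) t" if "t \<in> set (map f Ks)" for t
        using that f Ks(2) vf by auto
    qed
    have "\<forall>x\<in>H. dpt ?T' x \<le> dpt (Node r ts) x"
    proof
      fix x assume x: "x \<in> H"
      show "dpt ?T' x \<le> dpt (Node r ts) x"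
      proof (cases "x = r")
        case True then show ?thesis by (simp add: dpt.simps)
      next
        case False
        then have "x \<in> \<Union>(set Ks)" using x Ks(2) Union_components[of E "H - {r}"] by auto
        then obtain K where K: "K \<in> set Ks" "x \<in> K" by auto
        have fK: "f K \<in> set (map f Ks)" using K(1) by simp
        have xv: "x \<in> verts (f K)" using vf[OF K(1)] K(2) by simp
        have e: "dpt ?T' x = Suc (dpt (f K) x)"
          using dpt_child[OF sym stT fK xv] .
        have KK: "K \<in> components E (H - {r})" using K(1) Ks(2) by simp
        have "Suc (dpt (f K) x) \<le> dpt (Node r ts) x" using conjunct2[OF f[OF KK]] K(2) by blast
        then show ?thesis using e by linarith
      qed
    qed
    then show ?thesis using stT True by auto
  qed
qed


lemma sum_split_children:
  assumes sym: "symp E" and st: "is_stt E S (Node r ts)"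
  shows "(\<Sum>x\<in>S. f x) = f r + (\<Sum>t\<in>set ts. \<Sum>x\<in>verts t. f x)"
proof -
  have S: "S = insert r (\<Union>t\<in>set ts. verts t)" using stt_verts[OF st] by simp
  have rn: "r \<notin> (\<Union>t\<in>set ts. verts t)" using stt_root_notin[OF st] by auto
  have "(\<Sum>x\<in>S. f x) = f r + (\<Sum>x\<in>(\<Union>t\<in>set ts. verts t). f x)"
    using S rn by (simp add: finite_verts)
  also have "(\<Sum>x\<in>(\<Union>t\<in>set ts. verts t). f x) = (\<Sum>t\<in>set ts. \<Sum>x\<in>verts t. f x)"
    by (rule sum.UNION_disjoint) (auto simp: finite_verts dest: stt_children_disj[OF sym st])
  finally show ?thesis .
qed

lemma main:
  assumes sym: "symp E"
  shows "is_stt E S C \<Longrightarrow> (\<forall>X\<in>set (subtrees C). is_centroid E w (verts X) (root X)) \<Longrightarrow>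
    (\<forall>x\<in>S. w x \<ge> 0) \<Longrightarrow> is_stt E S T \<Longrightarrow> cost w C \<le> 2 * cost w T - sum w S"
proof (induction C arbitrary: S T)
  case (Node c cts)
  note stC = Node.prems(1) and cen = Node.prems(2) and wpos = Node.prems(3) and stT = Node.prems(4)
  have ch: "S = verts (Node c cts)" "c \<in> S" "distinct (map verts cts)"
     "set (map verts cts) = components E (S - {c})" "\<And>t. t \<in> set cts \<Longrightarrow> is_stt E (verts t) t"
    using stt_D[OF stC] by blast+
  have vsub: "verts t \<subseteq> S - {c}" if t: "t \<in> set cts" for t
  proof -
    have "verts t \<in> components E (S - {c})" using ch(4) t by auto
    then show ?thesis by (rule components_sub)
  qed
  have ex: "\<forall>t\<in>set cts. \<exists>T'. is_stt E (verts t) T' \<and>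
      (\<forall>x\<in>verts t. dpt T' x + (if root T \<in> verts t then 0 else 1) \<le> dpt T x)"
  proof
    fix t assume t: "t \<in> set cts"
    have K: "verts t \<in> components E (S - {c})" using ch(4) t by auto
    have ne: "verts t \<noteq> {}" using components_ne[OF K] .
    have cn: "connected_on E (verts t)" using components_connected[OF sym K] .
    have sub: "verts t \<subseteq> S" using vsub[OF t] by auto
    show "\<exists>T'. is_stt E (verts t) T' \<and>
      (\<forall>x\<in>verts t. dpt T' x + (if root T \<in> verts t then 0 else 1) \<le> dpt T x)"
      using restrict[OF sym stT sub ne cn] .
  qed
  then obtain g where g: "\<And>t. t \<in> set cts \<Longrightarrow> is_stt E (verts t) (g t) \<and>
      (\<forall>x\<in>verts t. dpt (g t) x + (if root T \<in> verts t then 0 else 1) \<le> dpt T x)"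
    by metis
  define W where "W t = sum w (verts t)" for t
  define G where "G = (\<Sum>t\<in>set cts. cost w (g t))"
  define m where "m = sum w S"
  have Wpos: "\<And>t. t \<in> set cts \<Longrightarrow> W t \<ge> 0" unfolding W_def using vsub wpos
    by (meson DiffD1 subsetD sum_nonneg)
  have wc: "w c \<ge> 0" using wpos ch(2) by auto
  have msplit: "m = w c + (\<Sum>t\<in>set cts. W t)"
    unfolding m_def W_def using sum_split_children[OF sym stC, of w] .
  have IHt: "cost w t \<le> 2 * cost w (g t) - W t" if t: "t \<in> set cts" for t
  proof -
    have "\<forall>X\<in>set (subtrees t). is_centroid E w (verts X) (root X)" using cen t by auto
    moreover have "\<forall>x\<in>verts t. w x \<ge> 0" using vsub[OF t] wpos by auto
    ultimately show ?thesis using Node.IH[OF t ch(5)[OF t]] g[OF t] unfolding W_def by auto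
  qed
  have costC: "cost w (Node c cts) = w c + (\<Sum>t\<in>set cts. W t + cost w t)"
  proof -
    have "cost w (Node c cts) = (\<Sum>x\<in>S. w x * real (dpt (Node c cts) x))"
      using cost_formula[OF sym stC] .
    also have "\<dots> = w c + (\<Sum>t\<in>set cts. \<Sum>x\<in>verts t. w x * real (dpt (Node c cts) x))"
      using sum_split_children[OF sym stC, of "\<lambda>x. w x * real (dpt (Node c cts) x)"] by (simp add: dpt_root)
    also have "(\<Sum>t\<in>set cts. \<Sum>x\<in>verts t. w x * real (dpt (Node c cts) x)) = (\<Sum>t\<in>set cts. W t + cost w t)"
    proof (intro sum.cong refl)
      fix t assume t: "t \<in> set cts"
      have "(\<Sum>x\<in>verts t. w x * real (dpt (Node c cts) x)) = (\<Sum>x\<in>verts t. w x + w x * real (dpt t x))"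
        using dpt_child[OF sym stC t] by (intro sum.cong refl) (simp add: algebra_simps)
      also have "\<dots> = W t + cost w t" unfolding W_def
        using cost_formula[OF sym ch(5)[OF t]] by (simp add: sum.distrib)
      finally show "(\<Sum>x\<in>verts t. w x * real (dpt (Node c cts) x)) = W t + cost w t" .
    qed
    finally show ?thesis .
  qed
  have costC': "cost w (Node c cts) \<le> w c + 2 * G"
  proof -
    have "(\<Sum>t\<in>set cts. W t + cost w t) \<le> (\<Sum>t\<in>set cts. 2 * cost w (g t))"
      using IHt by (intro sum_mono) fastforce
    then show ?thesis using costC unfolding G_def by (simp add: sum_distrib_left)
  qed
  define ind where "ind t = (if root T \<in> verts t then 0 else 1::real)" for t
  have costT: "cost w T \<ge> w c * real (dpt T c) + G + (\<Sum>t\<in>set cts. ind t * W t)"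
  proof -
    have "cost w T = (\<Sum>x\<in>S. w x * real (dpt T x))" using cost_formula[OF sym stT] .
    also have "\<dots> = w c * real (dpt T c) + (\<Sum>t\<in>set cts. \<Sum>x\<in>verts t. w x * real (dpt T x))"
      using sum_split_children[OF sym stC, of "\<lambda>x. w x * real (dpt T x)"] by simp
    finally have e: "cost w T = \<dots>" .
    have "(\<Sum>t\<in>set cts. cost w (g t) + ind t * W t) \<le> (\<Sum>t\<in>set cts. \<Sum>x\<in>verts t. w x * real (dpt T x))"
    proof (intro sum_mono)
      fix t assume t: "t \<in> set cts"
      have "cost w (g t) + ind t * W t = (\<Sum>x\<in>verts t. w x * (real (dpt (g t) x) + ind t))"
        unfolding W_def using cost_formula[OF sym conjunct1[OF g[OF t]]]
        by (simp add: sum.distrib algebra_simps sum_distrib_left sum_distrib_right)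
      also have "\<dots> \<le> (\<Sum>x\<in>verts t. w x * real (dpt T x))"
      proof (intro sum_mono mult_left_mono)
        fix x assume x: "x \<in> verts t"
        show "real (dpt (g t) x) + ind t \<le> real (dpt T x)"
          using conjunct2[OF g[OF t]] x unfolding ind_def by (auto split: if_splits)
        show "w x \<ge> 0" using x vsub[OF t] wpos by auto
      qed
      finally show "cost w (g t) + ind t * W t \<le> (\<Sum>x\<in>verts t. w x * real (dpt T x))" .
    qed
    then show ?thesis using e unfolding G_def by (simp add: sum.distrib)
  qed
  show ?case
  proof (cases "root T = c")
    case True
    then have "\<And>t. t \<in> set cts \<Longrightarrow> ind t = 1" unfolding ind_def using vsub by auto
    then have "(\<Sum>t\<in>set cts. ind t * W t) = m - w c" using msplit by simp
    moreover have "dpt T c = 1" using True by (cases T) (auto simp: dpt.simps)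
    ultimately have "cost w T \<ge> G + m" using costT by simp
    moreover have "m \<ge> w c" using msplit Wpos by (simp add: sum_nonneg)
    ultimately show ?thesis using costC' unfolding m_def by linarith
  next
    case False
    obtain rT tsT where Tn: "T = Node rT tsT" by (cases T)
    have rS: "root T \<in> S" using stt_D(2)[OF stT[unfolded Tn]] Tn by simp
    then have "root T \<in> (\<Union>t\<in>set cts. verts t)" using False ch(1) by auto
    then obtain t0 where t0: "t0 \<in> set cts" "root T \<in> verts t0" by auto
    have ind0: "ind t = 1" if t: "t \<in> set cts - {t0}" for t
    proof -
      have "verts t \<inter> verts t0 = {}" using stt_children_disj[OF sym stC _ t0(1)] t by blast
      then have "root T \<notin> verts t" using t0(2) by blast
      then show ?thesis unfolding ind_def by simp
    qed
    have "(\<Sum>t\<in>set cts. ind t * W t) = ind t0 * W t0 + (\<Sum>t\<in>set cts - {t0}. ind t * W t)"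
      using t0 by (simp add: sum.remove)
    also have "\<dots> = (\<Sum>t\<in>set cts - {t0}. W t)" using ind0 t0 unfolding ind_def by simp
    also have "\<dots> = m - w c - W t0" using msplit t0 by (simp add: sum.remove)
    finally have s: "(\<Sum>t\<in>set cts. ind t * W t) = m - w c - W t0" .
    have "Node c cts \<in> set (subtrees (Node c cts))" by simp
    then have "is_centroid E w (verts (Node c cts)) (root (Node c cts))" using bspec[OF cen] by blast
    then have ic: "is_centroid E w S c" using ch(1) by simp
    have allH: "\<forall>H\<in>components E (S - {c}). sum w H \<le> sum w S / 2" using ic unfolding is_centroid_def by (rule conjunct2)
    have "verts t0 \<in> components E (S - {c})" using ch(4) t0 by (metis image_eqI set_map)
    then have "W t0 \<le> m / 2" unfolding W_def m_def using bspec[OF allH] by blast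
    moreover have "dpt T c \<ge> 2" using dpt_nonroot[OF sym stT ch(2)] False by auto
    then have "w c * real (dpt T c) \<ge> w c * 2" using wc by (intro mult_left_mono) auto
    ultimately have "cost w T \<ge> w c + G + m / 2" using costT s by linarith
    then show ?thesis using costC' wc unfolding m_def by linarith
  qed
qed


lemma finite_stt: "finite S \<Longrightarrow> finite {T. is_stt E S T}"
proof (induction "card S" arbitrary: S rule: less_induct)
  case less
  define A where "A = (\<Union>r\<in>S. \<Union>K\<in>components E (S - {r}). {t. is_stt E K t})"
  have finA: "finite A" unfolding A_def
  proof (rule finite_UN_I)
    show "finite S" by fact
    fix r assume r: "r \<in> S"
    show "finite (\<Union>K\<in>components E (S - {r}). {t. is_stt E K t})"
    proof (rule finite_UN_I)
      show "finite (components E (S - {r}))" using less.prems by (simp add: finite_components)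
      fix K assume K: "K \<in> components E (S - {r})"
      have Ks: "K \<subseteq> S - {r}" using components_sub[OF K] .
      then have "K \<subset> S" using r by blast
      then have "card K < card S" using psubset_card_mono[OF less.prems] by blast
      moreover have "finite K" using Ks less.prems finite_subset by blast
      ultimately show "finite {t. is_stt E K t}" using less.hyps by blast
    qed
  qed
  have sub: "{T. is_stt E S T} \<subseteq> (\<lambda>(r, ts). Node r ts) ` (S \<times> {ts. set ts \<subseteq> A \<and> length ts \<le> card S})"
  proof
    fix T assume "T \<in> {T. is_stt E S T}"
    then have st: "is_stt E S T" by simp
    obtain r ts where T: "T = Node r ts" by (cases T)
    have st': "is_stt E S (Node r ts)" using st T by simp
    note ch = stt_D[OF st']
    have "set ts \<subseteq> A"
    proof
      fix t assume t: "t \<in> set ts"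
      have "verts t \<in> components E (S - {r})" using ch(4) t by (metis image_eqI set_map)
      moreover have "is_stt E (verts t) t" using ch(5)[OF t] .
      ultimately show "t \<in> A" unfolding A_def using ch(2) by blast
    qed
    moreover have "length ts \<le> card S"
    proof -
      have "length ts = length (map verts ts)" by simp
      also have "\<dots> = card (set (map verts ts))" using distinct_card[OF ch(3)] by simp
      also have "\<dots> = card (components E (S - {r}))" using ch(4) by simp
      also have "\<dots> \<le> card (S - {r})" unfolding components_def by (rule card_image_le) (simp add: less.prems)
      also have "\<dots> \<le> card S" using less.prems by (simp add: card_Diff1_le)
      finally show ?thesis .
    qed
    ultimately have "(r, ts) \<in> S \<times> {ts. set ts \<subseteq> A \<and> length ts \<le> card S}" using ch(2) by simp
    then have "(\<lambda>(r, ts). Node r ts) (r, ts) \<in> (\<lambda>(r, ts). Node r ts) ` (S \<times> {ts. set ts \<subseteq> A \<and> length ts \<le> card S})"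
      by (rule imageI)
    then show "T \<in> (\<lambda>(r, ts). Node r ts) ` (S \<times> {ts. set ts \<subseteq> A \<and> length ts \<le> card S})"
      using T by simp
  qed
  have "finite (S \<times> {ts. set ts \<subseteq> A \<and> length ts \<le> card S})"
    using less.prems finite_lists_length_le[OF finA] by (rule finite_cartesian_product)
  then show ?case using sub finite_surj by blast
qed

lemma simple_path:
  assumes "R\<^sup>*\<^sup>* x y" shows "\<exists>xs. xs \<noteq> [] \<and> hd xs = x \<and> last xs = y \<and> distinct xs \<and>
     (\<forall>i. Suc i < length xs \<longrightarrow> R (xs!i) (xs!Suc i)) \<and> (\<forall>z\<in>set xs. z = x \<or> (\<exists>a. R a z))"
  using assms
proof (induction rule: converse_rtranclp_induct)
  case base
  have "[y] \<noteq> [] \<and> hd [y] = y \<and> last [y] = y \<and> distinct [y] \<and>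
     (\<forall>i. Suc i < length [y] \<longrightarrow> R ([y]!i) ([y]!Suc i)) \<and> (\<forall>z\<in>set [y]. z = y \<or> (\<exists>a. R a z))" by simp
  then show ?case by blast
next
  case (step x z)
  then obtain ys where ys: "ys \<noteq> []" "hd ys = z" "last ys = y" "distinct ys"
     "\<forall>i. Suc i < length ys \<longrightarrow> R (ys!i) (ys!Suc i)" "\<forall>u\<in>set ys. u = z \<or> (\<exists>a. R a u)"
    by blast
  show ?case
  proof (cases "x \<in> set ys")
    case True
    then obtain as bs where ab: "ys = as @ x # bs" by (meson split_list)
    have e: "\<forall>i. Suc i < length (x # bs) \<longrightarrow> R ((x#bs)!i) ((x#bs)!Suc i)"
    proof (intro allI impI)
      fix i assume i: "Suc i < length (x # bs)"
      have "Suc (length as + i) < length ys" using i ab by simp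
      then have "R (ys!(length as + i)) (ys!(length as + Suc i))" using ys(5) by simp
      then show "R ((x#bs)!i) ((x#bs)!Suc i)" unfolding ab nth_append_length_plus .
    qed
    have "\<forall>u\<in>set (x#bs). u = x \<or> (\<exists>a. R a u)" using ys(6) ab step(1) by auto
    moreover have "last (x # bs) = y" using ys(3) ab by simp
    moreover have "distinct (x # bs)" using ys(4) ab by simp
    ultimately show ?thesis using e by (intro exI[of _ "x # bs"]) auto
  next
    case False
    have e: "\<forall>i. Suc i < length (x # ys) \<longrightarrow> R ((x#ys)!i) ((x#ys)!Suc i)"
    proof (intro allI impI)
      fix i assume i: "Suc i < length (x # ys)"
      show "R ((x#ys)!i) ((x#ys)!Suc i)"
      proof (cases i)
        case 0 then show ?thesis using ys(1,2) step(1) by (cases ys) auto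
      next
        case (Suc j) then show ?thesis using ys(5) i by auto
      qed
    qed
    have "\<forall>u\<in>set (x#ys). u = x \<or> (\<exists>a. R a u)" using ys(6) step(1) by auto
    then show ?thesis using e ys False by (intro exI[of _ "x # ys"]) auto
  qed
qed

lemma crossing:
  "R\<^sup>*\<^sup>* a b \<Longrightarrow> a \<in> H \<Longrightarrow> b \<notin> H \<Longrightarrow> \<exists>x y. x \<in> H \<and> y \<notin> H \<and> R x y"
  by (induction rule: rtranclp_induct) auto

lemma no_two_nbrs:
  assumes acyc: "\<not> (\<exists>cs. is_cycle E cs)"
    and sym: "symp E"
    and H: "H \<in> components E (S - {v})" and u: "u \<in> H" and p: "p \<in> H"
    and e1: "E v u" and e2: "E p v"
  shows "u = p"
proof (rule ccontr)
  assume up: "u \<noteq> p"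
  obtain x0 where x0: "H = comp E (S - {v}) x0" using H unfolding components_def by auto
  have "u \<in> comp E (S - {v}) x0" using u x0 by simp
  then have Hu: "H = comp E (S - {v}) u" using comp_eq[OF sym] x0 by simp
  then have "p \<in> comp E (S - {v}) u" using p by simp
  then have rp: "(rel E (S - {v}))\<^sup>*\<^sup>* u p" by (simp add: comp_alt)
  obtain xs where xs: "xs \<noteq> []" "hd xs = u" "last xs = p" "distinct xs"
     "\<forall>i. Suc i < length xs \<longrightarrow> rel E (S - {v}) (xs!i) (xs!Suc i)"
     "\<forall>z\<in>set xs. z = u \<or> (\<exists>a. rel E (S - {v}) a z)"
    using simple_path[OF rp] by blast
  have uS: "u \<in> S - {v}" using subsetD[OF components_sub[OF H] u] .
  have vn: "v \<notin> set xs" using xs(6) uS by (auto simp: rel_def)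
  have len: "length xs \<ge> 2"
  proof (rule ccontr)
    assume "\<not> length xs \<ge> 2"
    moreover have "length xs \<noteq> 0" using xs(1) by simp
    ultimately have "length xs = 1" by linarith
    then have "xs = [hd xs]" by (cases xs) auto
    then have "hd xs = last xs" by (metis last.simps)
    then show False using xs(2,3) up by simp
  qed
  have "is_cycle E (v # xs)"
    unfolding is_cycle_def
  proof (intro conjI allI impI)
    show "3 \<le> length (v # xs)" using len by simp
    show "distinct (v # xs)" using vn xs(4) by simp
    show "E (last (v # xs)) (hd (v # xs))" using xs(1,3) e2 by simp
    fix i assume i: "Suc i < length (v # xs)"
    show "E ((v # xs) ! i) ((v # xs) ! Suc i)"
    proof (cases i)
      case 0 then show ?thesis using xs(1,2) e1 by (cases xs) auto
    next
      case (Suc j) then show ?thesis using xs(5) i by (auto simp: rel_def)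
    qed
  qed
  then show False using acyc by blast
qed


lemma heavy_step:
  fixes w :: "'a \<Rightarrow> real"
  assumes acyc: "\<not> (\<exists>cs. is_cycle E cs)"
    and sym: "symp E"
    and fin: "finite S" and con: "connected_on E S" and wpos: "\<forall>x\<in>S. w x \<ge> 0"
    and nocen: "\<And>v. v \<in> S \<Longrightarrow> \<exists>H\<in>components E (S - {v}). sum w H > sum w S / 2"
    and v: "v \<in> S" and H: "H \<in> components E (S - {v})" and hv: "sum w H > sum w S / 2"
  shows "\<exists>u H'. u \<in> S \<and> H' \<in> components E (S - {u}) \<and> sum w H' > sum w S / 2 \<and> card H' < card H"
proof -
  obtain x0 where x0: "H = comp E (S - {v}) x0" using H unfolding components_def by auto
  have HS: "H \<subseteq> S - {v}" using components_sub[OF H] .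
  obtain h where h: "h \<in> H" using components_ne[OF H] by auto
  have "\<exists>u\<in>H. E v u"
  proof (rule ccontr)
    assume nn: "\<not> (\<exists>u\<in>H. E v u)"
    have "v \<in> comp E S h" using con v h HS unfolding connected_on_def by blast
    then have r: "(rel E S)\<^sup>*\<^sup>* h v" by (simp add: comp_alt)
    have "\<And>y. (rel E S)\<^sup>*\<^sup>* h y \<Longrightarrow> y \<in> H"
    proof -
      fix y assume "(rel E S)\<^sup>*\<^sup>* h y"
      then show "y \<in> H"
      proof (induction rule: rtranclp_induct)
        case base then show ?case using h by simp
      next
        case (step y z)
        then have zS: "z \<in> S" and eyz: "E y z" by (auto simp: rel_def)
        have "z \<noteq> v" using nn step(3) eyz sym by (blast dest: sympD)
        then show ?case using comp_closed[of y E "S - {v}" x0 z] step(3) x0 zS eyz by auto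
      qed
    qed
    then have "v \<in> H" using r by blast
    then show False using HS by auto
  qed
  then obtain u where u: "u \<in> H" "E v u" by auto
  have uS: "u \<in> S" using u HS by auto
  obtain H' where H': "H' \<in> components E (S - {u})" "sum w H' > sum w S / 2" using nocen[OF uS] by auto
  have H'S: "H' \<subseteq> S - {u}" using components_sub[OF H'(1)] .
  have "H \<inter> H' \<noteq> {}"
  proof
    assume d: "H \<inter> H' = {}"
    have "sum w (H \<union> H') = sum w H + sum w H'" using d fin HS H'S
      by (meson finite_subset Diff_subset sum.union_disjoint)
    moreover have "sum w (H \<union> H') \<le> sum w S"
    proof -
      have s1: "H \<union> H' \<subseteq> S" using HS H'S by blast
      have s2: "\<And>b. b \<in> S - (H \<union> H') \<Longrightarrow> 0 \<le> w b" using wpos by blast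
      show ?thesis using sum_mono2[OF fin s1 s2] .
    qed
    ultimately show False using hv H'(2) by linarith
  qed
  then obtain h' where h': "h' \<in> H" "h' \<in> H'" by auto
  obtain y0 where y0: "H' = comp E (S - {u}) y0" using H'(1) unfolding components_def by blast
  have "h' \<in> comp E (S - {u}) y0" using h'(2) y0 by simp
  then have H'h: "H' = comp E (S - {u}) h'" using comp_eq[OF sym] y0 by simp
  have vH': "v \<notin> H'"
  proof
    assume "v \<in> H'"
    then have "v \<in> comp E (S - {u}) h'" using H'h by simp
    then have rr: "(rel E (S - {u}))\<^sup>*\<^sup>* h' v" by (simp add: comp_alt)
    have vnH: "v \<notin> H" using HS by blast
    obtain a b where ab: "a \<in> H" "b \<notin> H" "rel E (S - {u}) a b"
      using crossing[OF rr h'(1) vnH] by blast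
    have bS: "b \<in> S" "b \<noteq> u" and eab: "E a b" "a \<noteq> u" using ab(3) unfolding rel_def by auto
    have "b = v"
    proof (rule ccontr)
      assume "b \<noteq> v"
      then have bS': "b \<in> S - {v}" using bS by blast
      have "a \<in> comp E (S - {v}) x0" using ab(1) x0 by simp
      then have "b \<in> comp E (S - {v}) x0" using comp_closed bS' eab(1) by metis
      then show False using ab(2) x0 by simp
    qed
    then have "E a v" using eab(1) by simp
    then have "u = a" using no_two_nbrs[OF acyc sym H u(1) ab(1) u(2)] by simp
    then show False using eab(2) by simp
  qed
  have H'v: "H' \<subseteq> S - {v}" using H'S vH' by blast
  have cH': "connected_on E H'" using components_connected[OF sym H'(1)] .
  have "H' \<subseteq> comp E (S - {v}) h'" using connected_sub_comp[OF cH' H'v h'(2)] .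
  moreover have "h' \<in> comp E (S - {v}) x0" using h'(1) x0 by simp
  then have "comp E (S - {v}) h' = H" using comp_eq[OF sym] x0 by simp
  ultimately have "H' \<subseteq> H" by simp
  moreover have "u \<notin> H'" using H'S by blast
  ultimately have "H' \<subset> H" using u(1) by blast
  moreover have "finite H" using fin HS finite_subset by blast
  ultimately have "card H' < card H" using psubset_card_mono by blast
  then show ?thesis using uS H' by blast
qed

lemma centroid_exists:
  fixes w :: "'a \<Rightarrow> real"
  assumes acyc: "\<not> (\<exists>cs. is_cycle E cs)"
    and sym: "symp E"
    and fin: "finite S" and ne: "S \<noteq> {}" and con: "connected_on E S" and wpos: "\<forall>x\<in>S. w x \<ge> 0"
  shows "\<exists>v. is_centroid E w S v"
proof (rule ccontr)
  assume "\<not> (\<exists>v. is_centroid E w S v)"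
  then have nocen: "\<And>v. v \<in> S \<Longrightarrow> \<exists>H\<in>components E (S - {v}). sum w H > sum w S / 2"
    unfolding is_centroid_def by (meson not_le)
  have "\<And>n. \<not> (\<exists>v H. v \<in> S \<and> H \<in> components E (S - {v}) \<and> sum w H > sum w S / 2 \<and> card H = n)"
  proof -
    fix n show "\<not> (\<exists>v H. v \<in> S \<and> H \<in> components E (S - {v}) \<and> sum w H > sum w S / 2 \<and> card H = n)"
    proof (induction n rule: less_induct)
      case (less n)
      show ?case
      proof
        assume "\<exists>v H. v \<in> S \<and> H \<in> components E (S - {v}) \<and> sum w H > sum w S / 2 \<and> card H = n"
        then obtain v H where "v \<in> S" "H \<in> components E (S - {v})" "sum w H > sum w S / 2" "card H = n"
          by blast
        then show False using heavy_step[OF acyc sym fin con wpos nocen] less.IH by metis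
      qed
    qed
  qed
  moreover obtain v where "v \<in> S" using ne by auto
  ultimately show False using nocen by blast
qed

lemma subtrees_set: "set (subtrees (Node r ts)) = insert (Node r ts) (\<Union>t\<in>set ts. set (subtrees t))"
  by auto

lemma cent_tree_exists:
  fixes w :: "'a \<Rightarrow> real"
  assumes acyc: "\<not> (\<exists>cs. is_cycle E cs)"
    and sym: "symp E"
  shows "finite S \<Longrightarrow> S \<noteq> {} \<Longrightarrow> connected_on E S \<Longrightarrow> \<forall>x\<in>S. w x \<ge> 0 \<Longrightarrow>
    \<exists>C. is_stt E S C \<and> (\<forall>X\<in>set (subtrees C). is_centroid E w (verts X) (root X))"
proof (induction "card S" arbitrary: S rule: less_induct)
  case less
  obtain c where c: "is_centroid E w S c" using centroid_exists[OF acyc sym less.prems] by auto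
  have cS: "c \<in> S" using c unfolding is_centroid_def by auto
  have "\<forall>K\<in>components E (S - {c}). \<exists>C. is_stt E K C \<and> (\<forall>X\<in>set (subtrees C). is_centroid E w (verts X) (root X))"
  proof
    fix K assume K: "K \<in> components E (S - {c})"
    have Ks: "K \<subseteq> S - {c}" using components_sub[OF K] .
    have fK: "finite K" using Ks less.prems(1) finite_subset by blast
    have "K \<subset> S" using Ks cS by blast
    then have lt: "card K < card S" using psubset_card_mono[OF less.prems(1)] by blast
    have neK: "K \<noteq> {}" using components_ne[OF K] .
    have cK: "connected_on E K" using components_connected[OF sym K] .
    have wK: "\<forall>x\<in>K. w x \<ge> 0" using Ks less.prems(4) by blast
    show "\<exists>C. is_stt E K C \<and> (\<forall>X\<in>set (subtrees C). is_centroid E w (verts X) (root X))"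
      using less.hyps[OF lt fK neK cK wK] .
  qed
  then obtain f where f: "\<And>K. K \<in> components E (S - {c}) \<Longrightarrow> is_stt E K (f K) \<and>
      (\<forall>X\<in>set (subtrees (f K)). is_centroid E w (verts X) (root X))" by metis
  have "finite (components E (S - {c}))" using less.prems(1) by (simp add: finite_components)
  then obtain Ks where Ks: "distinct Ks" "set Ks = components E (S - {c})"
    using finite_distinct_list by metis
  have vf: "\<And>K. K \<in> set Ks \<Longrightarrow> verts (f K) = K" using f Ks(2) stt_verts by metis
  have mv: "map verts (map f Ks) = Ks" using vf by (induction Ks) auto
  let ?C = "Node c (map f Ks)"
  have vC: "verts ?C = S"
  proof -
    have "verts ?C = insert c (\<Union>K\<in>set Ks. verts (f K))" by simp
    also have "\<dots> = insert c (\<Union>(set Ks))" using vf by simp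
    also have "\<dots> = S" using Ks(2) Union_components[of E "S - {c}"] cS by auto
    finally show ?thesis .
  qed
  have stC: "is_stt E S ?C"
  proof (rule stt_I)
    show "S = verts ?C" using vC by simp
    show "c \<in> S" by fact
    show "distinct (map verts (map f Ks))" using mv Ks(1) by simp
    show "set (map verts (map f Ks)) = components E (S - {c})" using mv Ks(2) by simp
    show "is_stt E (verts t) t" if "t \<in> set (map f Ks)" for t
      using that f Ks(2) vf by auto
  qed
  have "\<forall>X\<in>set (subtrees ?C). is_centroid E w (verts X) (root X)"
  proof
    fix X assume X: "X \<in> set (subtrees ?C)"
    show "is_centroid E w (verts X) (root X)"
    proof (cases "X = ?C")
      case True then show ?thesis using vC c by simp
    next
      case False
      then obtain t where t: "t \<in> set (map f Ks)" "X \<in> set (subtrees t)" using X by auto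
      then obtain K where K: "K \<in> set Ks" "t = f K" by auto
      have "K \<in> components E (S - {c})" using K(1) Ks(2) by simp
      then have "\<forall>X\<in>set (subtrees (f K)). is_centroid E w (verts X) (root X)" using f by blast
      then show ?thesis using t(2) K(2) by blast
    qed
  qed
  then show ?case using stC by blast
qed


theorem theorem1:
  fixes V :: "'a set" and E :: "'a \<Rightarrow> 'a \<Rightarrow> bool" and w :: "'a \<Rightarrow> real"
  assumes "is_tree V E"
    and "\<And>x. x \<in> V \<Longrightarrow> w x \<ge> 0"
  shows "cent V E w \<le> 2 * OPT V E w - sum w V"
proof -
  have fin: "finite V" and ne: "V \<noteq> {}" and ug: "ugraph V E" and con: "connected_on E V"
    and acyc: "\<not> (\<exists>cs. is_cycle E cs)" using assms(1) unfolding is_tree_def by auto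
  have sym: "symp E" using ug unfolding ugraph_def symp_def by blast
  have wpos: "\<forall>x\<in>V. w x \<ge> 0" using assms(2) by blast
  obtain C0 where C0: "is_stt E V C0" "\<forall>X\<in>set (subtrees C0). is_centroid E w (verts X) (root X)"
    using cent_tree_exists[OF acyc sym fin ne con wpos] by blast
  have fs: "finite {T. is_stt E V T}" using finite_stt[OF fin] .
  have A: "{cost w T | T. is_stt E V T} = cost w ` {T. is_stt E V T}" by blast
  have B: "{cost w T | T. is_centroid_tree E w V T} \<subseteq> cost w ` {T. is_stt E V T}"
    unfolding is_centroid_tree_def by blast
  have finA: "finite {cost w T | T. is_stt E V T}" unfolding A using fs by (rule finite_imageI)
  have finB: "finite {cost w T | T. is_centroid_tree E w V T}"
    using finite_subset[OF B finite_imageI[OF fs]] .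
  have C0c: "is_centroid_tree E w V C0" unfolding is_centroid_tree_def using C0 by blast
  have neA: "{cost w T | T. is_stt E V T} \<noteq> {}" using C0(1) by blast
  have neB: "{cost w T | T. is_centroid_tree E w V T} \<noteq> {}" using C0c by blast
  have "cent V E w \<in> {cost w T | T. is_centroid_tree E w V T}"
    unfolding cent_def using finB neB by (rule Max_in)
  then obtain C where C: "is_centroid_tree E w V C" "cent V E w = cost w C" by blast
  have "OPT V E w \<in> {cost w T | T. is_stt E V T}"
    unfolding OPT_def using finA neA by (rule Min_in)
  then obtain T where T: "is_stt E V T" "OPT V E w = cost w T" by blast
  have Cst: "is_stt E V C" and Ccen: "\<forall>X\<in>set (subtrees C). is_centroid E w (verts X) (root X)"
    using C(1) unfolding is_centroid_tree_def by blast+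
  have "cost w C \<le> 2 * cost w T - sum w V" using main[OF sym Cst Ccen wpos T(1)] .
  then show ?thesis using C(2) T(2) by simp
qed

end
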